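(* Fix $\alpha,\beta>0$, $\Gamma\ge1$, $R\ge1$, $1\le s\le n_2$, $\gamma>0$ and $c\ge1$. Let $\mathcal{A}:\mathbb{R}^{n_1\times n_2}\to\mathbb{R}^m$ be linear and have the additive rank-$2R$ effectively $(n_1,\max\{s,(\gamma/\beta)^2\})$-sparse RIP$_{(c+1)\Gamma}$ with constant $0<\delta<1$. Let $\hat X=\sum_{r=1}^R\hat u^r(\hat v^r)^T$ have rank $R$, where $\|\hat v^r\|_1\le\sqrt s\,\|\hat v^r\|_2$ for all $r$ and $\sum_{r=1}^R\|\hat u^r\|_2^2\|\hat v^r\|_2^2\le\Gamma^2$ (so $\hat X\in K^{R,\Gamma}_{n_1,s}$), and let $c_{\hat U}>0$ be a constant with $\sum_{r=1}^R(\|\hat u^r\|_2\|\hat v^r\|_2)^{2/3}\le c_{\hat U}R^{2/3}\|\hat X\|_{2/3}^{2/3}$. Let $\eta\in\mathbb{R}^m$, $y=\mathcal{A}(\hat X)+\eta$. Then for any global minimizer $(u^1_{\alpha,\beta},\dots,v^R_{\alpha,\beta})$ of $J^R_{\alpha,\beta}$ satisfying $\|v^r_{\alpha,\beta}\|_2\ge(\|\hat X\|_F+\|\eta\|_2+\sqrt\delta)^2/\gamma$ for all $r\in[R]$ and $\|\sigma_{\alpha,\beta}\|_2\le c\Gamma$, where $(\sigma_{\alpha,\beta})_r=\|u^r_{\alpha,\beta}\|_2\|v^r_{\alpha,\beta}\|_2$, one has $$\|\hat X-X_{\alpha,\beta}\|_F\le\sqrt{s^{1/3}R^{2/3}C_{2,1}c_{\hat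 U}}\;\sqrt[6]{\alpha\beta^2}\;\|\hat X\|_{2/3}^{1/3}+2\|\eta\|_2+\sqrt\delta,$$ where $X_{\alpha,\beta}=\sum_{r=1}^Ru^r_{\alpha,\beta}(v^r_{\alpha,\beta})^T$. Moreover, in this case $X_{\alpha,\beta}\in K^{R,c\Gamma}_{n_1,(\gamma/\beta)^2}$, via the decomposition $X_{\alpha,\beta}=\sum_r(\sigma_{\alpha,\beta})_r\frac{u^r_{\alpha,\beta}}{\|u^r_{\alpha,\beta}\|_2}\big(\frac{v^r_{\alpha,\beta}}{\|v^r_{\alpha,\beta}\|_2}\big)^T$.
   Context: For $y\in\mathbb{R}^m$ and $\alpha,\beta>0$, $J^R_{\alpha,\beta}(u^1,\dots,u^R,v^1,\dots,v^R)=\|y-\mathcal{A}(\sum_{r=1}^Ru^r(v^r)^T)\|_2^2+\alpha\sum_r\|u^r\|_2^2+\beta\sum_r\|v^r\|_1$ on $(\mathbb{R}^{n_1})^R\times(\mathbb{R}^{n_2})^R$. $C_{2,1}=(1/2)^{2/3}+2^{1/3}$. For $0<p<\infty$, $\|Z\|_p$ is the Schatten-$p$ (quasi-)norm, i.e. the $\ell_p$-(quasi-)norm of the vector of singular values of $Z$; $\|\cdot\|_F$ is the Frobenius norm. For $n\ge1$, $s>0$: $K_{n,s}=\{z\in\mathbb{R}^n:\|z\|_2\le1,\ \|z\|_1\le\sqrt s\}$. For $R\ge1,\Gamma\ge1$: $K^{R,\Gamma}_{s_1,s_2}$ is the set of $Z\in\mathbb{R}^{n_1\times n_2}$ of the form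 $Z=\sum_{r=1}^R\sigma_ru^r(v^r)^T$ with $u^r\in K_{n_1,s_1}$, $v^r\in K_{n_2,s_2}$, $\|u^r\|_2=\|v^r\|_2=1$, and $\|\sigma\|_2\le\Gamma$. A linear $\mathcal{A}$ has the additive rank-$R$ effectively $(s_1,s_2)$-sparse RIP$_\Gamma$ with constant $\delta>0$ if $|\|\mathcal{A}(Z)\|_2^2-\|Z\|_F^2|\le\delta$ for all $Z\in K^{R,\Gamma}_{s_1,s_2}$. *)

theory Defs
  imports "HOL-Analysis.Analysis"
begin

(* Matrices in R^{n1 x n2} are modelled as real^'n2^'n1 (row index 'n1, column index 'n2);
   n1 = CARD('n1), n2 = CARD('n2).  The norm on real^'n2^'n1 is the Frobenius norm,
   the norm on real^'n is the Euclidean l2 norm. *)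

definition l1norm :: "real^'n \<Rightarrow> real" where
  "l1norm x = (\<Sum>i\<in>UNIV. \<bar>x $ i\<bar>)"

definition outer :: "real^'n1 \<Rightarrow> real^'n2 \<Rightarrow> real^'n2^'n1" where
  "outer u v = (\<chi> i j. u $ i * v $ j)"

(* eigenvalues (with multiplicity) of the symmetric PSD matrix Z^T Z, chosen via an
   orthogonal diagonalization (spectral theorem) *)
definition gram_eigenvalues :: "real^'n2^'n1 \<Rightarrow> real^'n2" where
  "gram_eigenvalues Z = (SOME lam. \<exists>P::real^'n2^'n2. orthogonal_matrix P \<and>
      transpose Z ** Z = P ** (\<chi> i j. if i = j then lam $ i else 0) ** transpose P)"

(* singular values of Z: square roots of the eigenvalues of Z^T Z
   (padding zeros do not affect Schatten quasi-norms for p > 0) *)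
definition singular_values :: "real^'n2^'n1 \<Rightarrow> real^'n2" where
  "singular_values Z = (\<chi> j. sqrt (gram_eigenvalues Z $ j))"

definition schatten :: "real \<Rightarrow> real^'n2^'n1 \<Rightarrow> real" where
  "schatten p Z = (\<Sum>j\<in>UNIV. (singular_values Z $ j) powr p) powr (1 / p)"

definition J_functional ::
  "real \<Rightarrow> real \<Rightarrow> real^'m \<Rightarrow> (real^'n2^'n1 \<Rightarrow> real^'m) \<Rightarrow> nat
     \<Rightarrow> (nat \<Rightarrow> real^'n1) \<Rightarrow> (nat \<Rightarrow> real^'n2) \<Rightarrow> real" where
  "J_functional \<alpha> \<beta> y A R u v =
     (norm (y - A (\<Sum>r<R. outer (u r) (v r))))\<^sup>2
     + \<alpha> * (\<Sum>r<R. (norm (u r))\<^sup>2) + \<beta> * (\<Sum>r<R. l1norm (v r))"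

definition is_global_minimizer_J ::
  "real \<Rightarrow> real \<Rightarrow> real^'m \<Rightarrow> (real^'n2^'n1 \<Rightarrow> real^'m) \<Rightarrow> nat
     \<Rightarrow> (nat \<Rightarrow> real^'n1) \<Rightarrow> (nat \<Rightarrow> real^'n2) \<Rightarrow> bool" where
  "is_global_minimizer_J \<alpha> \<beta> y A R u v \<longleftrightarrow>
     (\<forall>u' v'. J_functional \<alpha> \<beta> y A R u v \<le> J_functional \<alpha> \<beta> y A R u' v')"

definition C21 :: real where
  "C21 = (1/2) powr (2/3) + 2 powr (1/3)"

definition Kvec :: "real \<Rightarrow> (real^'n) set" where
  "Kvec s = {z. norm z \<le> 1 \<and> l1norm z \<le> sqrt s}"

definition Kmat :: "nat \<Rightarrow> real \<Rightarrow> real \<Rightarrow> real \<Rightarrow> (real^'n2^'n1) set" where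
  "Kmat R \<Gamma> s1 s2 = {Z. \<exists>(\<sigma>::nat \<Rightarrow> real) (u::nat \<Rightarrow> real^'n1) (v::nat \<Rightarrow> real^'n2).
      Z = (\<Sum>r<R. \<sigma> r *\<^sub>R outer (u r) (v r)) \<and>
      (\<forall>r<R. u r \<in> Kvec s1 \<and> v r \<in> Kvec s2 \<and> norm (u r) = 1 \<and> norm (v r) = 1) \<and>
      sqrt (\<Sum>r<R. (\<sigma> r)\<^sup>2) \<le> \<Gamma>}"

definition additive_sparse_RIP ::
  "(real^'n2^'n1 \<Rightarrow> real^'m) \<Rightarrow> nat \<Rightarrow> real \<Rightarrow> real \<Rightarrow> real \<Rightarrow> real \<Rightarrow> bool" where
  "additive_sparse_RIP A R \<Gamma> s1 s2 \<delta> \<longleftrightarrow>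
     (\<forall>Z\<in>Kmat R \<Gamma> s1 s2. \<bar>(norm (A Z))\<^sup>2 - (norm Z)\<^sup>2\<bar> \<le> \<delta>)"

end

theory Submission
  imports Defs
begin


lemma l1norm_nonneg: "0 \<le> l1norm x"
  unfolding l1norm_def by (simp add: sum_nonneg)

lemma l1norm_scale: "l1norm (c *\<^sub>R x) = \<bar>c\<bar> * l1norm x"
  unfolding l1norm_def by (simp add: abs_mult sum_distrib_left)

lemma l1norm_zero[simp]: "l1norm 0 = 0"
  unfolding l1norm_def by simp

lemma l1norm_pos: "x \<noteq> 0 \<Longrightarrow> 0 < l1norm x"
proof -
  assume "x \<noteq> 0"
  then obtain i where "x $ i \<noteq> 0" by (metis vec_eq_iff zero_index)
  then have "\<bar>x $ i\<bar> \<le> l1norm x" unfolding l1norm_def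
    by (intro member_le_sum) auto
  moreover have "0 < \<bar>x $ i\<bar>" using \<open>x $ i \<noteq> 0\<close> by simp
  ultimately show ?thesis by linarith
qed

lemma l1norm_le_card: "l1norm (x::real^'n) \<le> sqrt (real CARD('n)) * norm x"
proof -
  have "l1norm x \<le> L2_set (\<lambda>i. x $ i) UNIV * L2_set (\<lambda>i::'n. 1::real) UNIV"
    using L2_set_mult_ineq[of "\<lambda>i. x $ i" "\<lambda>i::'n. 1::real" UNIV] unfolding l1norm_def by simp
  also have "L2_set (\<lambda>i. 1) (UNIV::'n set) = sqrt (real CARD('n))"
    by (simp add: L2_set_constant)
  also have "L2_set (\<lambda>i. x $ i) UNIV = norm x"
    unfolding norm_vec_def L2_set_def by simp
  finally show ?thesis by (simp add: mult.commute)
qed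

lemma outer_scale: "outer (a *\<^sub>R u) (b *\<^sub>R v) = (a * b) *\<^sub>R outer u v"
  unfolding outer_def by (simp add: vec_eq_iff)

lemma outer_zero1[simp]: "outer 0 v = 0" and outer_zero2[simp]: "outer u 0 = 0"
  unfolding outer_def by (simp_all add: vec_eq_iff)

lemma outer_neg: "outer (- u) v = - outer u v"
  unfolding outer_def by (simp add: vec_eq_iff)

lemma sum_split_nat: fixes k :: nat shows "(\<Sum>r<R+k. f r) = (\<Sum>r<R. f r) + (\<Sum>r<k. f (r + R)::'a::comm_monoid_add)"
  by (induction k) (simp_all add: ac_simps)

lemma axis_unit: "norm (axis i (1::real)) = 1" "l1norm (axis i (1::real)) = 1"
  by (simp, simp add: l1norm_def axis_def if_distrib sum.delta cong: if_cong)

lemma Kmat_intro: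
  fixes w :: "nat \<Rightarrow> real^'n1" and z :: "nat \<Rightarrow> real^'n2"
  assumes s2: "s2 \<ge> 1" and l1: "\<forall>r<N. l1norm (z r) \<le> sqrt s2 * norm (z r)"
    and G: "sqrt (\<Sum>r<N. (norm (w r) * norm (z r))\<^sup>2) \<le> G"
  shows "(\<Sum>r<N. outer (w r) (z r)) \<in> Kmat N G (real CARD('n1)) s2"
proof -
  define e1 :: "real^'n1" where "e1 = axis undefined 1"
  define e2 :: "real^'n2" where "e2 = axis undefined 1"
  define \<sigma> where "\<sigma> r = norm (w r) * norm (z r)" for r
  define u' where "u' r = (if w r = 0 then e1 else w r /\<^sub>R norm (w r))" for r
  define v' where "v' r = (if z r = 0 then e2 else z r /\<^sub>R norm (z r))" for r
  have eq: "\<sigma> r *\<^sub>R outer (u' r) (v' r) = outer (w r) (z r)" for r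
  proof (cases "w r = 0 \<or> z r = 0")
    case True then show ?thesis by (auto simp: \<sigma>_def)
  next
    case False
    then have "\<sigma> r *\<^sub>R outer (u' r) (v' r) = (\<sigma> r * (inverse (norm (w r)) * inverse (norm (z r)))) *\<^sub>R outer (w r) (z r)"
      by (simp add: u'_def v'_def outer_scale)
    also have "\<sigma> r * (inverse (norm (w r)) * inverse (norm (z r))) = 1"
      using False by (simp add: \<sigma>_def field_simps)
    finally show ?thesis by simp
  qed
  have "u' r \<in> Kvec (real CARD('n1)) \<and> v' r \<in> Kvec s2 \<and> norm (u' r) = 1 \<and> norm (v' r) = 1"
    if "r < N" for r
  proof -
    have nu: "norm (u' r) = 1" by (simp add: u'_def e1_def axis_unit)
    have nv: "norm (v' r) = 1" by (simp add: v'_def e2_def axis_unit)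
    have "l1norm (u' r) \<le> sqrt (real CARD('n1))" using l1norm_le_card[of "u' r"] nu by simp
    moreover have "l1norm (v' r) \<le> sqrt s2"
    proof (cases "z r = 0")
      case True then show ?thesis using s2 by (simp add: v'_def e2_def axis_unit)
    next
      case False
      then have "l1norm (v' r) = l1norm (z r) / norm (z r)"
        by (simp add: v'_def l1norm_scale divide_inverse mult.commute)
      also have "\<dots> \<le> sqrt s2" using l1 that False by (simp add: divide_le_eq)
      finally show ?thesis .
    qed
    ultimately show ?thesis using nu nv by (simp add: Kvec_def)
  qed
  moreover have "(\<Sum>r<N. outer (w r) (z r)) = (\<Sum>r<N. \<sigma> r *\<^sub>R outer (u' r) (v' r))"
    by (simp add: eq)
  ultimately show ?thesis unfolding Kmat_def using G
    by (intro CollectI exI[of _ \<sigma>] exI[of _ u'] exI[of _ v']) (simp add: \<sigma>_def)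
qed

lemma cube3: "(x::real) \<ge> 0 \<Longrightarrow> (x powr (1/3))^3 = x"
  by (cases "x = 0") (simp_all add: powr_power)

lemma sq_pow: "(x::real) \<ge> 0 \<Longrightarrow> (x powr c)^2 = (x^2) powr c"
  by (simp add: power2_eq_square powr_mult)

lemma pow23: "(y::real) \<ge> 0 \<Longrightarrow> y powr (2/3) = (y^2) powr (1/3)"
  by (cases "y = 0") (simp_all add: sq_pow[symmetric] powr_power)

lemma C21_eq: "C21 = 1 / (2 powr (1/3))^2 + 2 powr (1/3)"
proof -
  have "(2::real) powr (2/3) = (2 powr (1/3))^2" by (simp add: powr_power)
  then show ?thesis unfolding C21_def by (simp add: powr_divide)
qed

lemma alg: "(p::real) > 0 \<Longrightarrow> q > 0 \<Longrightarrow> k > 0 \<Longrightarrow>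
   p^3 * (q / (k * p))^2 + q^3 / (q / (k * p)) = p * q^2 * (1 / k^2 + k)"
  by (simp add: field_simps power3_eq_cube power2_eq_square)

lemma rescale:
  fixes a :: "real^'n1" and b :: "real^'n2"
  assumes \<alpha>: "\<alpha> > 0" and \<beta>: "\<beta> > 0" and s: "s \<ge> 0" and l1: "l1norm b \<le> sqrt s * norm b"
  shows "\<exists>a' b'. outer a' b' = outer a b \<and>
     \<alpha> * (norm a')\<^sup>2 + \<beta> * l1norm b' \<le> C21 * (\<alpha> * \<beta>\<^sup>2) powr (1/3) * s powr (1/3) * (norm a * norm b) powr (2/3)"
proof (cases "a = 0 \<or> b = 0")
  case True
  have "0 \<le> C21" unfolding C21_def by simp
  then have "0 \<le> C21 * (\<alpha> * \<beta>\<^sup>2) powr (1/3) * s powr (1/3) * (norm a * norm b) powr (2/3)"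
    by simp
  then show ?thesis using True by (intro exI[of _ 0]) auto
next
  case False
  define L where "L = l1norm b"
  have L: "L > 0" using False l1norm_pos L_def by auto
  define p where "p = (\<alpha> * (norm a)\<^sup>2) powr (1/3)"
  define q where "q = (\<beta> * L) powr (1/3)"
  define k :: real where "k = 2 powr (1/3)"
  have p: "p > 0" "p^3 = \<alpha> * (norm a)\<^sup>2" using False \<alpha> by (auto simp: p_def cube3)
  have q: "q > 0" "q^3 = \<beta> * L" using L \<beta> by (auto simp: q_def cube3)
  have k: "k > 0" "k^3 = 2" by (auto simp: k_def cube3)
  define t where "t = q / (k * p)"
  have t: "t > 0" using p q k by (simp add: t_def)
  have e1: "outer (t *\<^sub>R a) ((1/t) *\<^sub>R b) = outer a b" using t by (simp add: outer_scale)
  have "\<alpha> * (norm (t *\<^sub>R a))\<^sup>2 + \<beta> * l1norm ((1/t) *\<^sub>R b) = p^3 * t^2 + q^3 / t"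
    using t p q by (simp add: l1norm_scale L_def power_mult_distrib)
  also have "\<dots> = p * q^2 * (1 / k^2 + k)"
    using alg[OF p(1) q(1) k(1)] by (simp add: t_def)
  also have "1 / k^2 + k = C21" by (simp add: C21_eq k_def)
  also have "p * q^2 = (\<alpha> * (norm a)\<^sup>2 * (\<beta> * L)^2) powr (1/3)"
  proof -
    have "q^2 = ((\<beta> * L)^2) powr (1/3)" unfolding q_def by (rule sq_pow) (use \<beta> L in simp)
    then show ?thesis using powr_mult[of "\<alpha> * (norm a)\<^sup>2" "(\<beta> * L)^2" "1/3"] \<alpha>
      by (simp add: p_def)
  qed
  also have "\<dots> \<le> (\<alpha> * \<beta>\<^sup>2 * s * (norm a * norm b)^2) powr (1/3)"
  proof (rule powr_mono2)
    have "L^2 \<le> (sqrt s * norm b)^2" using L l1 L_def by (intro power_mono) auto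
    then have "L^2 \<le> s * (norm b)^2" using s by (simp add: power_mult_distrib)
    then have "\<alpha> * (norm a)\<^sup>2 * \<beta>\<^sup>2 * L^2 \<le> \<alpha> * (norm a)\<^sup>2 * \<beta>\<^sup>2 * (s * (norm b)^2)"
      using \<alpha> \<beta> by (intro mult_left_mono) auto
    then show "\<alpha> * (norm a)\<^sup>2 * (\<beta> * L)^2 \<le> \<alpha> * \<beta>\<^sup>2 * s * (norm a * norm b)^2"
      by (simp add: power_mult_distrib ac_simps)
  qed (use \<alpha> \<beta> L in auto)
  also have "(\<alpha> * \<beta>\<^sup>2 * s * (norm a * norm b)^2) powr (1/3)
      = (\<alpha> * \<beta>\<^sup>2) powr (1/3) * s powr (1/3) * (norm a * norm b) powr (2/3)"
    using \<alpha> \<beta> s by (simp add: powr_mult pow23 power_mult_distrib)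
  finally have "\<alpha> * (norm (t *\<^sub>R a))\<^sup>2 + \<beta> * l1norm ((1/t) *\<^sub>R b)
      \<le> C21 * (\<alpha> * \<beta>\<^sup>2) powr (1/3) * s powr (1/3) * (norm a * norm b) powr (2/3)"
    unfolding C21_def by (simp add: mult_right_mono ac_simps)
  then show ?thesis using e1 by blast
qed


theorem mainTheorem6:
  fixes A :: "real^'n2^'n1 \<Rightarrow> real^'m"
    and \<alpha> \<beta> \<Gamma> s \<gamma> c \<delta> cU :: real and R :: nat
    and uh u :: "nat \<Rightarrow> real^'n1" and vh v :: "nat \<Rightarrow> real^'n2"
    and \<eta> y :: "real^'m"
  assumes "\<alpha> > 0" "\<beta> > 0" "\<Gamma> \<ge> 1" "R \<ge> 1"
    and "1 \<le> s" "s \<le> real CARD('n2)" "\<gamma> > 0" "c \<ge> 1"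
    and "linear A"
    and "additive_sparse_RIP A (2 * R) ((c + 1) * \<Gamma>)
           (real CARD('n1)) (max s ((\<gamma> / \<beta>)\<^sup>2)) \<delta>"
    and "0 < \<delta>" "\<delta> < 1"
    and "rank (\<Sum>r<R. outer (uh r) (vh r)) = R"
    and "\<forall>r<R. l1norm (vh r) \<le> sqrt s * norm (vh r)"
    and "(\<Sum>r<R. (norm (uh r))\<^sup>2 * (norm (vh r))\<^sup>2) \<le> \<Gamma>\<^sup>2"
    and "cU > 0"
    and "(\<Sum>r<R. (norm (uh r) * norm (vh r)) powr (2/3))
           \<le> cU * real R powr (2/3) * (schatten (2/3) (\<Sum>r<R. outer (uh r) (vh r))) powr (2/3)"
    and "y = A (\<Sum>r<R. outer (uh r) (vh r)) + \<eta>"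
    and "is_global_minimizer_J \<alpha> \<beta> y A R u v"
    and "\<forall>r<R. norm (v r) \<ge>
           (norm (\<Sum>r<R. outer (uh r) (vh r)) + norm \<eta> + sqrt \<delta>)\<^sup>2 / \<gamma>"
    and "sqrt (\<Sum>r<R. (norm (u r) * norm (v r))\<^sup>2) \<le> c * \<Gamma>"
  shows "norm ((\<Sum>r<R. outer (uh r) (vh r)) - (\<Sum>r<R. outer (u r) (v r)))
           \<le> sqrt (s powr (1/3) * real R powr (2/3) * C21 * cU) * (\<alpha> * \<beta>\<^sup>2) powr (1/6)
               * (schatten (2/3) (\<Sum>r<R. outer (uh r) (vh r))) powr (1/3)
             + 2 * norm \<eta> + sqrt \<delta>
         \<and> (\<Sum>r<R. outer (u r) (v r)) \<in> Kmat R (c * \<Gamma>) (real CARD('n1)) ((\<gamma> / \<beta>)\<^sup>2)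
         \<and> (\<Sum>r<R. outer (u r) (v r))
             = (\<Sum>r<R. (norm (u r) * norm (v r)) *\<^sub>R
                   outer (u r /\<^sub>R norm (u r)) (v r /\<^sub>R norm (v r)))
         \<and> (\<forall>r<R. u r /\<^sub>R norm (u r) \<in> Kvec (real CARD('n1))
                 \<and> v r /\<^sub>R norm (v r) \<in> Kvec ((\<gamma> / \<beta>)\<^sup>2))"
  proof -
  note a = assms
  define Xh where "Xh = (\<Sum>r<R. outer (uh r) (vh r))"
  define X where "X = (\<Sum>r<R. outer (u r) (v r))"
  define M where "M = max s ((\<gamma> / \<beta>)\<^sup>2)"
  define S where "S = schatten (2/3) Xh"
  define B where "B = norm Xh + norm \<eta> + sqrt \<delta>"
  have M1: "M \<ge> 1" using a(5) by (simp add: M_def)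
  have RR: "2 * R = R + R" by simp
  have rip: "\<And>Z. Z \<in> Kmat (2 * R) ((c + 1) * \<Gamma>) (real CARD('n1)) M \<Longrightarrow> \<bar>(norm (A Z))\<^sup>2 - (norm Z)\<^sup>2\<bar> \<le> \<delta>"
    using a(10) unfolding additive_sparse_RIP_def M_def by blast
  have Pb: "(\<Sum>r<R. (norm (uh r) * norm (vh r))\<^sup>2) \<le> \<Gamma>\<^sup>2"
    using a(15) by (simp add: power_mult_distrib)
  have sP: "sqrt (\<Sum>r<R. (norm (uh r) * norm (vh r))\<^sup>2) \<le> \<Gamma>"
    using Pb a(3) real_sqrt_le_mono[OF Pb] by simp
  have vhl1: "l1norm (vh r) \<le> sqrt M * norm (vh r)" if "r < R" for r
  proof -
    have "sqrt s \<le> sqrt M" by (simp add: M_def)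
    then have "sqrt s * norm (vh r) \<le> sqrt M * norm (vh r)" by (simp add: mult_right_mono)
    then show ?thesis using a(14) that by force
  qed
  have XhK: "Xh \<in> Kmat (2 * R) ((c + 1) * \<Gamma>) (real CARD('n1)) M"
  proof -
    define w where "w r = (if r < R then uh r else 0)" for r
    define z where "z r = (if r < R then vh r else 0)" for r
    have "(\<Sum>r<2*R. outer (w r) (z r)) \<in> Kmat (2 * R) ((c + 1) * \<Gamma>) (real CARD('n1)) M"
    proof (rule Kmat_intro[OF M1])
      show "\<forall>r<2 * R. l1norm (z r) \<le> sqrt M * norm (z r)" using vhl1 by (simp add: z_def)
      have eqs: "(\<Sum>r<2*R. (norm (w r) * norm (z r))\<^sup>2) = (\<Sum>r<R. (norm (uh r) * norm (vh r))\<^sup>2)"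
        unfolding RR sum_split_nat by (simp add: w_def z_def)
      then show "sqrt (\<Sum>r<2 * R. (norm (w r) * norm (z r))\<^sup>2) \<le> (c + 1) * \<Gamma>"
      proof -
        have "0 \<le> \<Gamma> * c" using a(3) a(8) by simp
        then show ?thesis using eqs sP by (simp add: algebra_simps)
      qed
    qed
    moreover have "(\<Sum>r<2*R. outer (w r) (z r)) = Xh"
      unfolding RR sum_split_nat by (simp add: w_def z_def Xh_def)
    ultimately show ?thesis by simp
  qed
  have "(norm (A Xh))\<^sup>2 \<le> (norm Xh)\<^sup>2 + \<delta>" using rip[OF XhK] by linarith
  then have "norm (A Xh) \<le> sqrt ((norm Xh)\<^sup>2 + \<delta>)" using real_le_rsqrt by blast
  also have "\<dots> \<le> norm Xh + sqrt \<delta>" using sqrt_add_le_add_sqrt[of "(norm Xh)\<^sup>2" \<delta>] a(11) by simp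
  finally have AXh: "norm (A Xh) \<le> norm Xh + sqrt \<delta>" .
  have ny: "norm y \<le> B"
    using a(18) AXh norm_triangle_ineq[of "A Xh" \<eta>] by (simp add: B_def Xh_def)
  have B0: "B \<ge> 0" using a(11) by (simp add: B_def add_nonneg_nonneg)
  have pen_nonneg: "0 \<le> \<alpha> * (\<Sum>r<R. (norm (u r))\<^sup>2)" "0 \<le> \<beta> * (\<Sum>r<R. l1norm (v r))"
    using a(1) a(2) by (simp_all add: sum_nonneg l1norm_nonneg)
  have J0: "J_functional \<alpha> \<beta> y A R u v \<le> J_functional \<alpha> \<beta> y A R (\<lambda>_. 0) (\<lambda>_. 0)"
    using a(19) unfolding is_global_minimizer_J_def by blast
  have "J_functional \<alpha> \<beta> y A R (\<lambda>_. 0) (\<lambda>_. 0) = (norm y)\<^sup>2"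
    using a(9) by (simp add: J_functional_def linear_0)
  also have "\<dots> \<le> B\<^sup>2" using ny by (simp add: power_mono)
  finally have "\<beta> * (\<Sum>r<R. l1norm (v r)) \<le> B\<^sup>2"
    using J0 pen_nonneg zero_le_power2[of "norm (y - A (\<Sum>r<R. outer (u r) (v r)))"]
    unfolding J_functional_def by linarith
  then have sumv: "(\<Sum>r<R. l1norm (v r)) \<le> B\<^sup>2 / \<beta>" using a(2) by (simp add: field_simps)
  have vl1: "l1norm (v r) \<le> sqrt ((\<gamma> / \<beta>)\<^sup>2) * norm (v r)" if "r < R" for r
  proof -
    have "l1norm (v r) \<le> (\<Sum>r<R. l1norm (v r))"
      using that by (intro member_le_sum) (auto simp: l1norm_nonneg)
    also have "\<dots> \<le> B\<^sup>2 / \<beta>" by (rule sumv)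
    also have "B\<^sup>2 \<le> \<gamma> * norm (v r)" using a(20) that a(7) by (simp add: B_def Xh_def field_simps)
    then have "B\<^sup>2 / \<beta> \<le> \<gamma> * norm (v r) / \<beta>" using a(2) by (simp add: divide_right_mono)
    finally show ?thesis using a(2) a(7) by simp
  qed
  have vpos: "v r \<noteq> 0" if "r < R" for r
  proof -
    have "sqrt \<delta> > 0" using a(11) by simp
    then have "B > 0" by (simp add: B_def add_nonneg_pos)
    then have "B\<^sup>2 / \<gamma> > 0" using a(7) by simp
    then show ?thesis using a(20) that by (force simp: B_def Xh_def)
  qed
  have upos: "u r \<noteq> 0" if "r < R" for r
  proof
    assume u0: "u r = 0"
    define v' where "v' = v(r := 0)"
    have "(\<Sum>r<R. outer (u r) (v' r)) = (\<Sum>r<R. outer (u r) (v r))"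
      by (rule sum.cong) (auto simp: v'_def u0)
    moreover have "(\<Sum>r<R. l1norm (v' r)) < (\<Sum>r<R. l1norm (v r))"
      by (rule sum_strict_mono_ex1) (use that vpos[OF that] l1norm_pos l1norm_nonneg in \<open>auto simp: v'_def\<close>)
    ultimately have "J_functional \<alpha> \<beta> y A R u v' < J_functional \<alpha> \<beta> y A R u v"
      using a(2) by (simp add: J_functional_def)
    then show False using a(19) unfolding is_global_minimizer_J_def by (meson not_le)
  qed
  have DK: "Xh - X \<in> Kmat (2 * R) ((c + 1) * \<Gamma>) (real CARD('n1)) M"
  proof -
    define w where "w r = (if r < R then uh r else - u (r - R))" for r
    define z where "z r = (if r < R then vh r else v (r - R))" for r
    have "(\<Sum>r<2*R. outer (w r) (z r)) \<in> Kmat (2 * R) ((c + 1) * \<Gamma>) (real CARD('n1)) M"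
    proof (rule Kmat_intro[OF M1])
      show "\<forall>r<2 * R. l1norm (z r) \<le> sqrt M * norm (z r)"
      proof (intro allI impI)
        fix r assume r: "r < 2 * R"
        show "l1norm (z r) \<le> sqrt M * norm (z r)"
        proof (cases "r < R")
          case True then show ?thesis using vhl1 by (simp add: z_def)
        next
          case False
          then have "r - R < R" using r by simp
          then have "l1norm (v (r - R)) \<le> sqrt ((\<gamma> / \<beta>)\<^sup>2) * norm (v (r - R))" by (rule vl1)
          also have "\<dots> \<le> sqrt M * norm (v (r - R))"
            by (intro mult_right_mono real_sqrt_le_mono) (auto simp: M_def)
          finally show ?thesis using False by (simp add: z_def)
        qed
      qed
      have "(\<Sum>r<2*R. (norm (w r) * norm (z r))\<^sup>2) = (\<Sum>r<R. (norm (uh r) * norm (vh r))\<^sup>2) + (\<Sum>r<R. (norm (u r) * norm (v r))\<^sup>2)"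
        unfolding RR sum_split_nat by (simp add: w_def z_def)
      moreover have "sqrt ((\<Sum>r<R. (norm (uh r) * norm (vh r))\<^sup>2) + (\<Sum>r<R. (norm (u r) * norm (v r))\<^sup>2))
          \<le> sqrt (\<Sum>r<R. (norm (uh r) * norm (vh r))\<^sup>2) + sqrt (\<Sum>r<R. (norm (u r) * norm (v r))\<^sup>2)"
        by (rule sqrt_add_le_add_sqrt) (simp_all add: sum_nonneg)
      ultimately show "sqrt (\<Sum>r<2 * R. (norm (w r) * norm (z r))\<^sup>2) \<le> (c + 1) * \<Gamma>"
        using sP a(21) by (simp add: algebra_simps power_mult_distrib)
    qed
    moreover have "(\<Sum>r<2*R. outer (w r) (z r)) = Xh - X"
      unfolding RR sum_split_nat by (simp add: w_def z_def Xh_def X_def outer_neg sum_negf)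
    ultimately show ?thesis by simp
  qed
  have "\<forall>r. \<exists>ab. r < R \<longrightarrow> outer (fst ab) (snd ab) = outer (uh r) (vh r) \<and>
     \<alpha> * (norm (fst ab))\<^sup>2 + \<beta> * l1norm (snd ab) \<le> C21 * (\<alpha> * \<beta>\<^sup>2) powr (1/3) * s powr (1/3) * (norm (uh r) * norm (vh r)) powr (2/3)"
  proof (intro allI)
    fix r
    show "\<exists>ab. r < R \<longrightarrow> outer (fst ab) (snd ab) = outer (uh r) (vh r) \<and>
     \<alpha> * (norm (fst ab))\<^sup>2 + \<beta> * l1norm (snd ab) \<le> C21 * (\<alpha> * \<beta>\<^sup>2) powr (1/3) * s powr (1/3) * (norm (uh r) * norm (vh r)) powr (2/3)"
    proof (cases "r < R")
      case True
      then obtain a' b' where "outer a' b' = outer (uh r) (vh r) \<and>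
     \<alpha> * (norm a')\<^sup>2 + \<beta> * l1norm b' \<le> C21 * (\<alpha> * \<beta>\<^sup>2) powr (1/3) * s powr (1/3) * (norm (uh r) * norm (vh r)) powr (2/3)"
        using rescale[OF a(1) a(2), of s "vh r" "uh r"] a(5) a(14) by force
      then show ?thesis by (intro exI[of _ "(a', b')"]) simp
    qed simp
  qed
  then obtain f where f: "\<And>r. r < R \<Longrightarrow> outer (fst (f r)) (snd (f r)) = outer (uh r) (vh r) \<and>
     \<alpha> * (norm (fst (f r)))\<^sup>2 + \<beta> * l1norm (snd (f r)) \<le> C21 * (\<alpha> * \<beta>\<^sup>2) powr (1/3) * s powr (1/3) * (norm (uh r) * norm (vh r)) powr (2/3)"
    by metis
  define U where "U r = fst (f r)" for r
  define V where "V r = snd (f r)" for r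
  define E where "E = sqrt (s powr (1/3) * real R powr (2/3) * C21 * cU) * (\<alpha> * \<beta>\<^sup>2) powr (1/6) * S powr (1/3)"
  have C0: "0 \<le> C21" unfolding C21_def by simp
  have E0: "E \<ge> 0" unfolding E_def using C0 a(16) by simp
  have sq6: "((\<alpha> * \<beta>\<^sup>2) powr (1/6))^2 = (\<alpha> * \<beta>\<^sup>2) powr (1/3)"
    using a(1) a(2) by (simp add: powr_power)
  have sqS: "(S powr (1/3))^2 = S powr (2/3)"
    by (cases "S = 0") (simp_all add: powr_power)
  have E2: "E^2 = C21 * (\<alpha> * \<beta>\<^sup>2) powr (1/3) * s powr (1/3) * (cU * real R powr (2/3) * S powr (2/3))"
    unfolding E_def power_mult_distrib sq6 sqS using C0 a(16) by simp
  have "(\<Sum>r<R. \<alpha> * (norm (U r))\<^sup>2 + \<beta> * l1norm (V r))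
      \<le> (\<Sum>r<R. C21 * (\<alpha> * \<beta>\<^sup>2) powr (1/3) * s powr (1/3) * (norm (uh r) * norm (vh r)) powr (2/3))"
    by (rule sum_mono) (use f in \<open>simp add: U_def V_def\<close>)
  also have "\<dots> = C21 * (\<alpha> * \<beta>\<^sup>2) powr (1/3) * s powr (1/3) * (\<Sum>r<R. (norm (uh r) * norm (vh r)) powr (2/3))"
    by (simp add: sum_distrib_left)
  also have "\<dots> \<le> C21 * (\<alpha> * \<beta>\<^sup>2) powr (1/3) * s powr (1/3) * (cU * real R powr (2/3) * S powr (2/3))"
    by (rule mult_left_mono) (use a(17) C0 in \<open>simp_all add: S_def Xh_def\<close>)
  also have "\<dots> = E^2" by (simp add: E2)
  finally have pen: "(\<Sum>r<R. \<alpha> * (norm (U r))\<^sup>2 + \<beta> * l1norm (V r)) \<le> E^2" .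
  have UV: "(\<Sum>r<R. outer (U r) (V r)) = Xh"
    unfolding Xh_def by (rule sum.cong) (simp_all add: f U_def V_def)
  have "J_functional \<alpha> \<beta> y A R U V = (norm \<eta>)\<^sup>2 + (\<Sum>r<R. \<alpha> * (norm (U r))\<^sup>2 + \<beta> * l1norm (V r))"
    unfolding J_functional_def UV using a(18) by (simp add: Xh_def sum.distrib sum_distrib_left)
  moreover have "J_functional \<alpha> \<beta> y A R u v \<le> J_functional \<alpha> \<beta> y A R U V"
    using a(19) unfolding is_global_minimizer_J_def by blast
  ultimately have "(norm (y - A X))\<^sup>2 \<le> (norm \<eta>)\<^sup>2 + E^2"
    using pen pen_nonneg unfolding J_functional_def X_def by linarith
  then have "norm (y - A X) \<le> sqrt ((norm \<eta>)\<^sup>2 + E^2)" using real_le_rsqrt by blast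
  also have "\<dots> \<le> norm \<eta> + E" using sqrt_add_le_add_sqrt[of "(norm \<eta>)\<^sup>2" "E^2"] E0 by simp
  finally have r1: "norm (y - A X) \<le> norm \<eta> + E" .
  have "y - A X = A (Xh - X) + \<eta>" using a(18) a(9) by (simp add: linear_diff Xh_def)
  then have "A (Xh - X) = (y - A X) - \<eta>" by simp
  then have "norm (A (Xh - X)) \<le> norm (y - A X) + norm \<eta>" by (metis norm_triangle_ineq4)
  with r1 have AD: "norm (A (Xh - X)) \<le> E + 2 * norm \<eta>" by simp
  have "(norm (Xh - X))\<^sup>2 \<le> (norm (A (Xh - X)))\<^sup>2 + \<delta>" using rip[OF DK] by linarith
  then have "norm (Xh - X) \<le> sqrt ((norm (A (Xh - X)))\<^sup>2 + \<delta>)" using real_le_rsqrt by blast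
  also have "\<dots> \<le> norm (A (Xh - X)) + sqrt \<delta>" using sqrt_add_le_add_sqrt[of "(norm (A (Xh - X)))\<^sup>2" \<delta>] a(11) by simp
  finally have main: "norm (Xh - X) \<le> E + 2 * norm \<eta> + sqrt \<delta>" using AD by simp
  have dec: "X = (\<Sum>r<R. (norm (u r) * norm (v r)) *\<^sub>R outer (u r /\<^sub>R norm (u r)) (v r /\<^sub>R norm (v r)))"
    unfolding X_def
  proof (rule sum.cong)
    fix r assume "r \<in> {..<R}"
    then have "u r \<noteq> 0" "v r \<noteq> 0" using upos vpos by auto
    then have "norm (u r) * norm (v r) * (inverse (norm (u r)) * inverse (norm (v r))) = 1"
      by (simp add: field_simps)
    then show "outer (u r) (v r) = (norm (u r) * norm (v r)) *\<^sub>R outer (u r /\<^sub>R norm (u r)) (v r /\<^sub>R norm (v r))"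
      by (simp add: outer_scale)
  qed simp
  have kv: "u r /\<^sub>R norm (u r) \<in> Kvec (real CARD('n1)) \<and> v r /\<^sub>R norm (v r) \<in> Kvec ((\<gamma> / \<beta>)\<^sup>2)"
    if "r < R" for r
  proof -
    have nu: "norm (u r /\<^sub>R norm (u r)) = 1" "norm (v r /\<^sub>R norm (v r)) = 1"
      using upos[OF that] vpos[OF that] by simp_all
    have "l1norm (u r /\<^sub>R norm (u r)) \<le> sqrt (real CARD('n1))"
      using l1norm_le_card[of "u r /\<^sub>R norm (u r)"] nu by simp
    moreover have "l1norm (v r /\<^sub>R norm (v r)) = l1norm (v r) / norm (v r)"
      by (simp add: l1norm_scale divide_inverse mult.commute)
    moreover have "l1norm (v r) / norm (v r) \<le> sqrt ((\<gamma> / \<beta>)\<^sup>2)"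
      using vl1[OF that] vpos[OF that] by (simp add: divide_le_eq)
    ultimately show ?thesis using nu by (simp add: Kvec_def)
  qed
  have XK: "X \<in> Kmat R (c * \<Gamma>) (real CARD('n1)) ((\<gamma> / \<beta>)\<^sup>2)"
    unfolding Kmat_def
    apply (rule CollectI)
    apply (rule exI[of _ "\<lambda>r. norm (u r) * norm (v r)"])
    apply (rule exI[of _ "\<lambda>r. u r /\<^sub>R norm (u r)"])
    apply (rule exI[of _ "\<lambda>r. v r /\<^sub>R norm (v r)"])
    using dec kv a(21) upos vpos by simp
  show ?thesis
    using main XK dec kv unfolding E_def S_def Xh_def X_def by blast
qed

end
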